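(* Let $\mathcal{H}$ be a PICOD hypergraph with $\eta(\mathcal{H})=\Delta(\mathcal{H})$. Then $\beta_q(\mathcal{H})=\Delta(\mathcal{H})$ for every prime power $q$, and hence $\beta(\mathcal{H})=\Delta(\mathcal{H})$.
   Context: PICOD problem: a server holds $m$ messages $b_1,\dots,b_m\in\mathbb{F}_q$; there are $n$ clients, client $i$ having side-information $\{b_j: j\in S_i\}$, $S_i\subseteq[m]$, and request-set $R_i=[m]\setminus S_i$ (assumed non-empty); client $i$ wants any one message $b_j$ with $j\in R_i$. A PICOD scheme of length $\ell$ over $\mathbb{F}_q$ is an encoding map $\phi:\mathbb{F}_q^m\to\mathbb{F}_q^\ell$ such that for every client $i$ there is an index $j_i\in R_i$ and a function $\psi_i$ with $\psi_i(\phi(b),(b_k)_{k\in S_i})=b_{j_i}$ for all $b\in\mathbb{F}_q^m$. The PICOD hypergraph $\mathcal{H}=(\mathcal{V},\mathcal{E})$ has vertex set $[m]$ and edge set $\{R_i:i\in[n]\}$. $\beta_q(\mathcal{H})$ is the minimum length of a PICOD scheme over $\mathbb{F}_q$, and $\beta(\mathcal{H})=\min_q\beta_q(\mathcal{H})$. The degree of a vertex is the number of edges containing it; $\Delta(\mathcal{H})$ is the maximum degree. A nested collection of hyperedges of nesting length $L$ is a family $\mathcal{E}_1,\dots,\mathcal{E}_L\subseteq\mathcal{E}$ with $|\mathcal{E}_i|=2^{i-1}$, such that for every $i\in[L-1]$ and every $R\in\mathcal{E}_i$ there exist non-empty edges $R',R''\in\mathcal{E}_{i+1}$ with $R',R''\subsetneq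 R$ and $R'\cap R''=\emptyset$. The nesting number $\eta(\mathcal{H})$ is the maximum nesting length of such a collection in $\mathcal{H}$. *)

theory Defs
  imports "HOL-Computational_Algebra.Primes"
begin

(* Messages/codewords: vectors of length k over an alphabet of size q
   (identified with {0..<q}; F_q as a set of q symbols), represented as
   functions nat => nat that vanish outside {0..<k}. *)
definition vecs :: "nat \<Rightarrow> nat \<Rightarrow> (nat \<Rightarrow> nat) set" where
  "vecs q k = {b. (\<forall>j<k. b j < q) \<and> (\<forall>j\<ge>k. b j = 0)}"

(* PICOD instance: m messages 0..m-1, n clients 0..n-1, client i has request set R i,
   side information S i = {0..<m} - R i. *)
definition side_info :: "nat \<Rightarrow> (nat \<Rightarrow> nat set) \<Rightarrow> nat \<Rightarrow> nat set" where
  "side_info m R i = {..<m} - R i"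

definition is_picod_scheme :: "nat \<Rightarrow> nat \<Rightarrow> nat \<Rightarrow> (nat \<Rightarrow> nat set) \<Rightarrow> nat \<Rightarrow> bool" where
  "is_picod_scheme q m n R l \<longleftrightarrow>
     (\<exists>\<phi> :: (nat \<Rightarrow> nat) \<Rightarrow> (nat \<Rightarrow> nat).
        (\<forall>b\<in>vecs q m. \<phi> b \<in> vecs q l) \<and>
        (\<forall>i<n. \<exists>j\<in>R i. \<exists>\<psi> :: (nat \<Rightarrow> nat) \<Rightarrow> (nat \<Rightarrow> nat) \<Rightarrow> nat.
            \<forall>b\<in>vecs q m. \<psi> (\<phi> b) (\<lambda>k. if k \<in> side_info m R i then b k else 0) = b j))"

definition beta_q :: "nat \<Rightarrow> nat \<Rightarrow> nat \<Rightarrow> (nat \<Rightarrow> nat set) \<Rightarrow> nat" where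
  "beta_q q m n R = (LEAST l. is_picod_scheme q m n R l)"

definition prime_power :: "nat \<Rightarrow> bool" where
  "prime_power q \<longleftrightarrow> (\<exists>p k. prime p \<and> k \<ge> 1 \<and> q = p ^ k)"

definition beta :: "nat \<Rightarrow> nat \<Rightarrow> (nat \<Rightarrow> nat set) \<Rightarrow> nat" where
  "beta m n R = Inf {beta_q q m n R | q. prime_power q}"

definition edges :: "nat \<Rightarrow> (nat \<Rightarrow> nat set) \<Rightarrow> nat set set" where
  "edges n R = R ` {..<n}"

definition degree :: "nat set set \<Rightarrow> nat \<Rightarrow> nat" where
  "degree E v = card {e\<in>E. v \<in> e}"

definition max_degree :: "nat \<Rightarrow> nat set set \<Rightarrow> nat" where
  "max_degree m E = Max (insert 0 (degree E ` {..<m}))"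

definition is_nested_collection :: "nat set set \<Rightarrow> nat \<Rightarrow> (nat \<Rightarrow> nat set set) \<Rightarrow> bool" where
  "is_nested_collection E L F \<longleftrightarrow>
     (\<forall>i\<in>{1..L}. F i \<subseteq> E \<and> card (F i) = 2 ^ (i - 1)) \<and>
     (\<forall>i\<in>{1..L-1}. \<forall>R\<in>F i. \<exists>R' R''. R' \<in> F (i+1) \<and> R'' \<in> F (i+1) \<and>
         R' \<noteq> {} \<and> R'' \<noteq> {} \<and> R' \<subset> R \<and> R'' \<subset> R \<and> R' \<inter> R'' = {})"

definition nesting_number :: "nat set set \<Rightarrow> nat" where
  "nesting_number E = (GREATEST L. \<exists>F. is_nested_collection E L F)"

end

theory Submission
  imports Defs
begin

lemma vecs_Suc_sub: "vecs q (Suc k) \<subseteq> (\<lambda>(b,t). b(k:=t)) ` (vecs q k \<times> {..<q})"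
proof
  fix b assume b: "b \<in> vecs q (Suc k)"
  have "b(k:=0) \<in> vecs q k" using b unfolding vecs_def by auto
  moreover have "b k < q" using b unfolding vecs_def by auto
  ultimately have "(b(k:=0), b k) \<in> vecs q k \<times> {..<q}" by auto
  moreover have "b = (\<lambda>(b,t). b(k:=t)) (b(k:=0), b k)" by auto
  ultimately show "b \<in> (\<lambda>(b,t). b(k:=t)) ` (vecs q k \<times> {..<q})" by blast
qed

lemma vecs_fin_card: "finite (vecs q k) \<and> card (vecs q k) \<le> q ^ k"
proof (induction k)
  case 0
  have "vecs q 0 = {\<lambda>_. 0}" unfolding vecs_def by (auto simp: fun_eq_iff)
  then show ?case by simp
next
  case (Suc k)
  have f: "finite (vecs q k \<times> {..<q})" using Suc by auto
  have "card (vecs q (Suc k)) \<le> card ((\<lambda>(b,t). b(k:=t)) ` (vecs q k \<times> {..<q}))"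
    by (rule card_mono[OF finite_imageI[OF f] vecs_Suc_sub])
  also have "\<dots> \<le> card (vecs q k \<times> {..<q})" by (rule card_image_le[OF f])
  also have "\<dots> = card (vecs q k) * q" by (simp add: card_cartesian_product)
  also have "\<dots> \<le> q ^ k * q" using Suc by simp
  finally show ?case using finite_subset[OF vecs_Suc_sub finite_imageI[OF f]] by (simp add: mult.commute)
qed

definition agree :: "nat \<Rightarrow> nat \<Rightarrow> nat set \<Rightarrow> (nat\<Rightarrow>nat) \<Rightarrow> (nat\<Rightarrow>nat) set" where
  "agree q m e a = {b \<in> vecs q m. \<forall>k. k \<notin> e \<longrightarrow> b k = a k}"

lemma dec:
  assumes psi: "\<forall>b\<in>vecs q m. \<psi> (\<phi> b) (\<lambda>k. if k \<in> side_info m R c then b k else 0) = b j"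
    and b: "b \<in> agree q m (R c) a" and b': "b' \<in> agree q m (R c) a" and eq: "\<phi> b = \<phi> b'"
  shows "b j = b' j"
proof -
  have "(\<lambda>k. if k \<in> side_info m R c then b k else 0) = (\<lambda>k. if k \<in> side_info m R c then b' k else 0)"
    using b b' unfolding agree_def side_info_def by auto
  moreover have "b \<in> vecs q m" "b' \<in> vecs q m" using b b' unfolding agree_def by auto
  ultimately show ?thesis using psi eq by (metis (no_types, lifting))
qed

lemma key:
  assumes cl: "\<forall>i<n. R i \<subseteq> {..<m} \<and> R i \<noteq> {}"
    and nest: "is_nested_collection (edges n R) L F"
    and sch: "\<forall>i<n. \<exists>j\<in>R i. \<exists>\<psi> :: (nat \<Rightarrow> nat) \<Rightarrow> (nat \<Rightarrow> nat) \<Rightarrow> nat.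
            \<forall>b\<in>vecs q m. \<psi> (\<phi> b) (\<lambda>k. if k \<in> side_info m R i then b k else 0) = b j"
    and q: "q \<ge> 1"
  shows "1 \<le> i \<Longrightarrow> i + Suc d \<le> L + 1 \<Longrightarrow> e \<in> F i \<Longrightarrow> a \<in> vecs q m
    \<Longrightarrow> q ^ Suc d \<le> card (\<phi> ` agree q m e a)"
proof (induction d arbitrary: i e a)
  case 0
  have fin: "finite (\<phi> ` agree q m e a)"
    using vecs_fin_card[of q m] unfolding agree_def by auto
  have "e \<in> edges n R" using nest 0 unfolding is_nested_collection_def by auto
  then obtain c where c: "c < n" "e = R c" unfolding edges_def by auto
  then obtain j \<psi> where j: "j \<in> R c" and psi: "\<forall>b\<in>vecs q m. \<psi> (\<phi> b) (\<lambda>k. if k \<in> side_info m R c then b k else 0) = b j"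
    using sch by blast
  have jm: "j < m" using cl c j by auto
  have sub: "(\<lambda>t. a(j:=t)) ` {..<q} \<subseteq> agree q m e a"
    using 0(4) jm j c unfolding agree_def vecs_def by auto
  have inj: "inj_on (\<lambda>t. \<phi> (a(j:=t))) {..<q}"
  proof (rule inj_onI)
    fix s t assume s: "s \<in> {..<q}" and t: "t \<in> {..<q}" and eq: "\<phi> (a(j:=s)) = \<phi> (a(j:=t))"
    have "a(j:=s) \<in> agree q m (R c) a" "a(j:=t) \<in> agree q m (R c) a" using sub s t c by auto
    then have "(a(j:=s)) j = (a(j:=t)) j"
      using dec[where \<psi>=\<psi> and \<phi>=\<phi> and R=R and c=c and j=j and q=q and m=m, OF psi, where b="a(j:=s)" and b'="a(j:=t)" and a=a] eq by blast
    then show "s = t" by simp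
  qed
  have "(\<lambda>t. \<phi> (a(j:=t))) ` {..<q} \<subseteq> \<phi> ` agree q m e a" using sub by auto
  then have "card ((\<lambda>t. \<phi> (a(j:=t))) ` {..<q}) \<le> card (\<phi> ` agree q m e a)"
    by (rule card_mono[OF fin])
  then show ?case using card_image[OF inj] by simp
next
  case (Suc d)
  have fin: "finite (\<phi> ` agree q m e a)"
    using vecs_fin_card[of q m] unfolding agree_def by auto
  have "e \<in> edges n R" using nest Suc unfolding is_nested_collection_def by auto
  then obtain c where c: "c < n" "e = R c" unfolding edges_def by auto
  then obtain j \<psi> where j: "j \<in> R c" and psi: "\<forall>b\<in>vecs q m. \<psi> (\<phi> b) (\<lambda>k. if k \<in> side_info m R c then b k else 0) = b j"
    using sch by blast
  have jm: "j < m" using cl c j by auto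
  have em: "e \<subseteq> {..<m}" using cl c by auto
  have iL: "i \<in> {1..L-1}" using Suc by auto
  have ch: "\<forall>i\<in>{1..L-1}. \<forall>R\<in>F i. \<exists>R' R''. R' \<in> F (i+1) \<and> R'' \<in> F (i+1) \<and>
         R' \<noteq> {} \<and> R'' \<noteq> {} \<and> R' \<subset> R \<and> R'' \<subset> R \<and> R' \<inter> R'' = {}"
    using nest unfolding is_nested_collection_def by (rule conjunct2)
  obtain R' R'' where RR: "R' \<in> F (i+1)" "R'' \<in> F (i+1)" "R' \<subset> e" "R'' \<subset> e" "R' \<inter> R'' = {}"
    using ch[rule_format, OF iL Suc(4)] by blast
  obtain e' where e': "e' \<in> F (i+1)" "e' \<subset> e" "j \<notin> e'"
    using RR by blast
  define at where "at t = (\<lambda>k. if k \<in> e then (if k = j then t else 0) else a k)" for t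
  have atv: "at t \<in> vecs q m" if "t < q" for t
    using that Suc(5) em q unfolding at_def vecs_def by auto
  have IH: "q ^ Suc d \<le> card (\<phi> ` agree q m e' (at t))" if "t < q" for t
  proof -
    have "i + 1 + Suc d \<le> L + 1" using Suc(3) by simp
    then show ?thesis using Suc.IH[of "i+1" e' "at t", OF _ _ e'(1) atv[OF that]] by simp
  qed
  have subs: "agree q m e' (at t) \<subseteq> agree q m e a" for t
    using e' unfolding agree_def at_def by auto
  have valj: "b j = t" if "b \<in> agree q m e' (at t)" for b t
    using that e' j c unfolding agree_def at_def by auto
  have disj: "\<phi> ` agree q m e' (at s) \<inter> \<phi> ` agree q m e' (at t) = {}" if "s \<noteq> t" for s t
  proof (rule ccontr)
    assume "\<phi> ` agree q m e' (at s) \<inter> \<phi> ` agree q m e' (at t) \<noteq> {}"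
    then obtain b b' where b: "b \<in> agree q m e' (at s)" and b': "b' \<in> agree q m e' (at t)" and eq: "\<phi> b = \<phi> b'"
      by auto
    have "b \<in> agree q m (R c) a" "b' \<in> agree q m (R c) a" using subs b b' c by blast+
    then have "b j = b' j" using dec[where \<psi>=\<psi> and \<phi>=\<phi> and R=R and c=c and j=j and q=q and m=m, OF psi, where b=b and b'=b' and a=a] eq by blast
    then show False using valj[OF b] valj[OF b'] that by simp
  qed
  have finA: "finite (\<phi> ` agree q m e' (at t))" for t by (rule finite_subset[OF image_mono[OF subs] fin])
  have U: "(\<Union>t\<in>{..<q}. \<phi> ` agree q m e' (at t)) \<subseteq> \<phi> ` agree q m e a"
    using subs by blast
  have "card (\<Union>t\<in>{..<q}. \<phi> ` agree q m e' (at t)) = (\<Sum>t<q. card (\<phi> ` agree q m e' (at t)))"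
    by (rule card_UN_disjoint) (use finA disj in auto)
  also have "\<dots> \<ge> (\<Sum>t<q. q ^ Suc d)" by (rule sum_mono) (use IH in auto)
  finally have "q * q ^ Suc d \<le> card (\<Union>t\<in>{..<q}. \<phi> ` agree q m e' (at t))" by simp
  also have "\<dots> \<le> card (\<phi> ` agree q m e a)" by (rule card_mono[OF fin U])
  finally show ?case by simp
qed


lemma cover_step:
  fixes R :: "nat \<Rightarrow> nat set" and m n :: nat
  assumes cl: "\<forall>i<n. R i \<subseteq> {..<m} \<and> R i \<noteq> {}" and I: "I \<subseteq> {..<n}"
  shows "\<exists>T. T \<subseteq> {..<m} \<and> (\<forall>i\<in>I. card (R i \<inter> T) \<le> 1) \<and>
     (\<forall>i\<in>I. \<forall>v\<in>R i. \<exists>i'\<in>I. v \<in> R i' \<and> card (R i' \<inter> T) = 1)"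
proof -
  define P where "P = {T. T \<subseteq> {..<m} \<and> (\<forall>i\<in>I. card (R i \<inter> T) \<le> 1)}"
  have finP: "finite P" unfolding P_def by (rule finite_subset[of _ "Pow {..<m}"]) auto
  have "{} \<in> P" unfolding P_def by auto
  then obtain T where T: "T \<in> P" and max: "\<forall>T'\<in>P. T \<le> T' \<longrightarrow> T = T'"
    using finite_has_maximal[OF finP] by blast
  have Tm: "T \<subseteq> {..<m}" and Tp: "\<forall>i\<in>I. card (R i \<inter> T) \<le> 1" using T unfolding P_def by auto
  have "\<exists>i'\<in>I. v \<in> R i' \<and> card (R i' \<inter> T) = 1" if i: "i \<in> I" and v: "v \<in> R i" for i v
  proof (cases "v \<in> T")
    case True
    have fin: "finite (R i \<inter> T)" using Tm by (auto intro: finite_subset)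
    have "v \<in> R i \<inter> T" using True v by auto
    then have "card (R i \<inter> T) \<ge> 1" using fin by (metis One_nat_def Suc_leI card_gt_0_iff empty_iff)
    then show ?thesis using Tp i v by (intro bexI[of _ i]) auto
  next
    case False
    have vm: "v < m" using cl I i v by auto
    have "insert v T \<notin> P" using max False by auto
    then obtain i' where i': "i' \<in> I" and gt: "\<not> card (R i' \<inter> insert v T) \<le> 1"
      using Tm vm unfolding P_def by auto
    have vi: "v \<in> R i'" using gt Tp i' by (cases "v \<in> R i'") auto
    have fin: "finite (R i' \<inter> T)" using Tm by (auto intro: finite_subset)
    have "R i' \<inter> insert v T = insert v (R i' \<inter> T)" using vi by auto
    then have "card (R i' \<inter> insert v T) = Suc (card (R i' \<inter> T))" using fin False by simp
    then show ?thesis using gt Tp i' vi by (intro bexI[of _ i']) auto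
  qed
  then show ?thesis using Tm Tp by blast
qed

lemma cover:
  fixes R :: "nat \<Rightarrow> nat set" and m n :: nat
  assumes cl: "\<forall>i<n. R i \<subseteq> {..<m} \<and> R i \<noteq> {}"
  shows "I \<subseteq> {..<n} \<Longrightarrow> (\<forall>v<m. degree (R ` I) v \<le> d) \<Longrightarrow>
    \<exists>T :: nat \<Rightarrow> nat set. (\<forall>k. T k \<subseteq> {..<m}) \<and> (\<forall>i\<in>I. \<exists>k<d. card (R i \<inter> T k) = 1)"
proof (induction d arbitrary: I)
  case 0
  have "I = {}"
  proof (rule ccontr)
    assume "I \<noteq> {}"
    then obtain i where i: "i \<in> I" by auto
    then obtain v where v: "v \<in> R i" using cl 0 by blast
    have vm: "v < m" using cl 0 i v by blast
    have fin: "finite {e \<in> R ` I. v \<in> e}" using 0 by (auto intro: finite_subset)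
    have "R i \<in> {e \<in> R ` I. v \<in> e}" using i v by auto
    then have "degree (R ` I) v > 0" unfolding degree_def using fin card_gt_0_iff by blast
    then show False using 0 vm by auto
  qed
  then show ?case by (intro exI[of _ "\<lambda>_. {}"]) auto
next
  case (Suc d)
  obtain T0 where T0m: "T0 \<subseteq> {..<m}" and T0p: "\<forall>i\<in>I. card (R i \<inter> T0) \<le> 1"
    and cov: "\<forall>i\<in>I. \<forall>v\<in>R i. \<exists>i'\<in>I. v \<in> R i' \<and> card (R i' \<inter> T0) = 1"
    using cover_step[OF cl Suc(2)] by blast
  define I' where "I' = {i\<in>I. card (R i \<inter> T0) \<noteq> 1}"
  have I'sub: "I' \<subseteq> {..<n}" using Suc(2) unfolding I'_def by auto
  have "degree (R ` I') v \<le> d" if vm: "v < m" for v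
  proof (cases "\<exists>i\<in>I'. v \<in> R i")
    case False
    then have em: "{e \<in> R ` I'. v \<in> e} = {}" by auto
    show ?thesis unfolding degree_def em by simp
  next
    case True
    then obtain i where "i \<in> I" "v \<in> R i" unfolding I'_def by auto
    then obtain i' where i': "i' \<in> I" "v \<in> R i'" "card (R i' \<inter> T0) = 1" using cov by blast
    have fin: "finite {e \<in> R ` I. v \<in> e}" using Suc(2) by (auto intro: finite_subset)
    have "R i' \<notin> R ` I'" using i' unfolding I'_def by auto
    then have sub: "{e \<in> R ` I'. v \<in> e} \<subseteq> {e \<in> R ` I. v \<in> e} - {R i'}" unfolding I'_def by auto
    have mem: "R i' \<in> {e \<in> R ` I. v \<in> e}" using i' by auto
    have "card {e \<in> R ` I'. v \<in> e} \<le> card ({e \<in> R ` I. v \<in> e} - {R i'})"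
      by (rule card_mono[OF _ sub]) (use fin in auto)
    also have "\<dots> = card {e \<in> R ` I. v \<in> e} - 1" using mem fin by simp
    also have "\<dots> \<le> d" using Suc(3) vm unfolding degree_def by fastforce
    finally show ?thesis unfolding degree_def .
  qed
  then obtain T' where T'm: "\<forall>k. T' k \<subseteq> {..<m}" and T'c: "\<forall>i\<in>I'. \<exists>k<d. card (R i \<inter> T' k) = 1"
    using Suc.IH[OF I'sub] by blast
  define T where "T k = (if k = 0 then T0 else T' (k - 1))" for k
  have "\<forall>k. T k \<subseteq> {..<m}" using T0m T'm unfolding T_def by auto
  moreover have "\<exists>k<Suc d. card (R i \<inter> T k) = 1" if i: "i \<in> I" for i
  proof (cases "card (R i \<inter> T0) = 1")
    case True
    then show ?thesis by (intro exI[of _ 0]) (auto simp: T_def)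
  next
    case False
    then have "i \<in> I'" using i unfolding I'_def by auto
    then obtain k where "k < d" "card (R i \<inter> T' k) = 1" using T'c by blast
    then show ?thesis by (intro exI[of _ "Suc k"]) (auto simp: T_def)
  qed
  ultimately show ?case by blast
qed


lemma scheme:
  fixes R :: "nat \<Rightarrow> nat set" and m n q d :: nat and T :: "nat \<Rightarrow> nat set"
  assumes Tm: "\<forall>k. T k \<subseteq> {..<m}" and Tc: "\<forall>i<n. \<exists>k<d. card (R i \<inter> T k) = 1"
    and q: "q \<ge> 1"
  shows "is_picod_scheme q m n R d"
  unfolding is_picod_scheme_def
proof (intro exI[of _ "\<lambda>b k. if k < d then (\<Sum>v\<in>T k. b v) mod q else 0"] conjI ballI allI impI)
  fix b :: "nat \<Rightarrow> nat" assume "b \<in> vecs q m"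
  show "(\<lambda>k. if k < d then (\<Sum>v\<in>T k. b v) mod q else 0) \<in> vecs q d"
    using q unfolding vecs_def by auto
next
  fix i assume i: "i < n"
  obtain k where k: "k < d" "card (R i \<inter> T k) = 1" using Tc i by blast
  then obtain j where j: "R i \<inter> T k = {j}" using card_1_singletonE[OF k(2)] by blast
  have finT: "finite (T k)" using Tm finite_subset by blast
  show "\<exists>j\<in>R i. \<exists>\<psi>. \<forall>b\<in>vecs q m. \<psi> ((\<lambda>b k. if k < d then (\<Sum>v\<in>T k. b v) mod q else 0) b)
          (\<lambda>ka. if ka \<in> side_info m R i then b ka else 0) = b j"
  proof (intro bexI[of _ j] exI[of _ "\<lambda>c s. nat ((int (c k) - (\<Sum>v\<in>T k - {j}. int (s v))) mod int q)"] ballI)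
    show "j \<in> R i" using j by auto
  next
    fix b :: "nat \<Rightarrow> nat" assume b: "b \<in> vecs q m"
    have jT: "j \<in> T k" using j by auto
    have side: "(\<Sum>v\<in>T k - {j}. int (if v \<in> side_info m R i then b v else 0)) = (\<Sum>v\<in>T k - {j}. int (b v))"
    proof (rule sum.cong)
      fix v assume v: "v \<in> T k - {j}"
      have "v \<notin> R i" using v j by auto
      moreover have "v < m" using v Tm by auto
      ultimately show "int (if v \<in> side_info m R i then b v else 0) = int (b v)"
        unfolding side_info_def by auto
    qed simp
    have bj: "b j < q"
    proof -
      have "j < m" using jT Tm by auto
      then show ?thesis using b unfolding vecs_def by auto
    qed
    have split: "(\<Sum>v\<in>T k. int (b v)) = int (b j) + (\<Sum>v\<in>T k - {j}. int (b v))"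
      using sum.remove[OF finT jT] by simp
    have "int ((\<Sum>v\<in>T k. b v) mod q) = (\<Sum>v\<in>T k. int (b v)) mod int q"
      by (simp add: of_nat_mod)
    then have "(int ((\<Sum>v\<in>T k. b v) mod q) - (\<Sum>v\<in>T k - {j}. int (b v))) mod int q
        = int (b j) mod int q"
      using split by (simp add: mod_diff_left_eq)
    also have "\<dots> = int (b j)" using bj by simp
    finally show "nat ((int ((\<lambda>b k. if k < d then (\<Sum>v\<in>T k. b v) mod q else 0) b k) -
          (\<Sum>v\<in>T k - {j}. int ((\<lambda>ka. if ka \<in> side_info m R i then b ka else 0) v))) mod int q) = b j"
      using k(1) side by simp
  qed
qed

lemma nested_bound:
  assumes "is_nested_collection (edges n R) L F"
  shows "L \<le> n"
proof (cases "L = 0")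
  case False
  have "F L \<subseteq> edges n R" "card (F L) = 2 ^ (L - 1)" using assms False unfolding is_nested_collection_def by auto
  then have "2 ^ (L - 1) \<le> card (edges n R)"
    by (metis card_mono edges_def finite_imageI finite_lessThan)
  also have "\<dots> \<le> n" unfolding edges_def using card_image_le[of "{..<n}" R] by simp
  finally have "2 ^ (L - 1) \<le> n" .
  moreover have "L \<le> 2 ^ (L - 1)" using False
  proof -
    have "L - 1 < 2 ^ (L - 1)" by (rule less_exp)
    then show ?thesis using False by linarith
  qed
  ultimately show ?thesis by linarith
qed simp

lemma nesting_exists: "\<exists>F. is_nested_collection (edges n R) (nesting_number (edges n R)) F"
proof -
  have P0: "\<exists>F. is_nested_collection (edges n R) 0 F" unfolding is_nested_collection_def by auto
  show ?thesis unfolding nesting_number_def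
    by (rule GreatestI_nat[where P="\<lambda>L. \<exists>F. is_nested_collection (edges n R) L F", OF P0]) (use nested_bound in blast)
qed


theorem corollary1:
  fixes m n :: nat and R :: "nat \<Rightarrow> nat set"
  assumes "\<forall>i<n. R i \<subseteq> {..<m} \<and> R i \<noteq> {}"
    and "nesting_number (edges n R) = max_degree m (edges n R)"
  shows "(\<forall>q. prime_power q \<longrightarrow> beta_q q m n R = max_degree m (edges n R))
         \<and> beta m n R = max_degree m (edges n R)"
proof -
  note cl = assms(1)
  define D where "D = max_degree m (edges n R)"
  have degb: "\<forall>v<m. degree (R ` {..<n}) v \<le> D"
  proof (intro allI impI)
    fix v assume "v < m"
    then have "degree (edges n R) v \<in> insert 0 (degree (edges n R) ` {..<m})" by auto
    then show "degree (R ` {..<n}) v \<le> D" unfolding D_def max_degree_def edges_def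
      by (intro Max_ge) auto
  qed
  obtain T where Tm: "\<forall>k. T k \<subseteq> {..<m}" and Tc: "\<forall>i\<in>{..<n}. \<exists>k<D. card (R i \<inter> T k) = 1"
    using cover[OF cl, of "{..<n}" D] degb by blast
  have up: "is_picod_scheme q m n R D" if "q \<ge> 1" for q
    by (rule scheme[OF Tm _ that]) (use Tc in auto)
  obtain F where F: "is_nested_collection (edges n R) D F"
    using nesting_exists[of n R] assms(2) unfolding D_def by auto
  have low: "D \<le> l" if q: "q \<ge> 2" and s: "is_picod_scheme q m n R l" for q l
  proof (cases "D = 0")
    case False
    obtain \<phi> :: "(nat \<Rightarrow> nat) \<Rightarrow> (nat \<Rightarrow> nat)" where ph: "\<forall>b\<in>vecs q m. \<phi> b \<in> vecs q l"
      and sch: "\<forall>i<n. \<exists>j\<in>R i. \<exists>\<psi> :: (nat \<Rightarrow> nat) \<Rightarrow> (nat \<Rightarrow> nat) \<Rightarrow> nat.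
            \<forall>b\<in>vecs q m. \<psi> (\<phi> b) (\<lambda>k. if k \<in> side_info m R i then b k else 0) = b j"
      using s unfolding is_picod_scheme_def by blast
    have "card (F 1) = 1" using F False unfolding is_nested_collection_def by auto
    then obtain e where e: "e \<in> F 1" by (metis card_1_singletonE insertI1)
    have a0: "(\<lambda>_. 0) \<in> vecs q m" using q unfolding vecs_def by auto
    have "q ^ Suc (D - 1) \<le> card (\<phi> ` agree q m e (\<lambda>_. 0))"
      by (rule key[OF cl F sch _ _ _ e a0]) (use q False in auto)
    also have "\<dots> \<le> card (vecs q l)"
      by (rule card_mono) (use vecs_fin_card ph in \<open>auto simp: agree_def\<close>)
    also have "\<dots> \<le> q ^ l" using vecs_fin_card by blast
    finally have "q ^ D \<le> q ^ l" using False by simp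
    then show ?thesis using q by (metis power_le_imp_le_exp Suc_1 Suc_le_lessD)
  qed simp
  have bq: "beta_q q m n R = D" if pq: "prime_power q" for q
  proof -
    obtain p k where pk: "prime p" "k \<ge> 1" "q = p ^ k" using pq unfolding prime_power_def by blast
    have "p \<ge> 2" using pk(1) prime_ge_2_nat by blast
    moreover have "p \<le> p ^ k" using pk(2) \<open>p \<ge> 2\<close> by (simp add: self_le_power)
    ultimately have q2: "q \<ge> 2" using pk(3) by linarith
    show ?thesis unfolding beta_q_def
      by (rule Least_equality) (use up[of q] low[OF q2] q2 in auto)
  qed
  have pp2: "prime_power 2" unfolding prime_power_def by (rule exI[of _ 2], rule exI[of _ 1]) auto
  have "{beta_q q m n R | q. prime_power q} = {D}" using bq pp2 by auto
  then have "beta m n R = D" unfolding beta_def by simp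
  then show ?thesis using bq unfolding D_def by blast
qed


end
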